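(* For each $n$, let $\delta_1,\ldots,\delta_n>0$ be expected degrees with $\delta_i\delta_j\le \sum_{k=1}^n\delta_k$ for all $i,j$, and let $A$ be the adjacency matrix of a random undirected graph on $\{1,\ldots,n\}$ drawn from the Chung-Lu model: $A$ is symmetric, $A(i,i)=0$, and the entries $\{A(i,j):1\le i<j\le n\}$ are independent with $A(i,j)\sim\mathrm{Bernoulli}(P(i,j))$, where $P(i,j)=\frac{\delta_i\delta_j}{\sum_{k=1}^n\delta_k}$. Let $d_i=\sum_{j=1}^n A(i,j)$ be the degree of node $i$, and set $m_1=\sum_{i=1}^n d_i$, $m_2=\sum_{i=1}^n d_i^2$, $\mu_1=\sum_{i=1}^n\delta_i$, $\mu_2=\sum_{i=1}^n\delta_i^2$. Suppose that, as $n\to\infty$, $\frac{1}{n}\sum_{i=1}^n\delta_i\to\infty$ and $\frac{\sum_i\delta_i^2}{\sum_i\delta_i}=\omega(\log^2 n)$. Then for every $\epsilon>0$, $$P\left[\left|\frac{m_1}{\mu_1}-1\right|>\epsilon\right]\to 0\quad\text{and}\quad P\left[\left|\frac{m_2}{\mu_2}-1\right|>\epsilon\right]\to 0\qquad (n\to\infty).$$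
   Context: The expected degrees $\delta_i=\delta_i^{(n)}$ may depend on $n$; all limits are as $n\to\infty$. $f(n)=\omega(g(n))$ means $f(n)/g(n)\to\infty$. *)

theory Defs
  imports "HOL-Probability.Probability" "HOL-Library.Landau_Symbols"
begin

text \<open>Vertices are 0,...,n-1. \<open>\<delta> n i\<close> is the expected degree of vertex i in the n-th model.\<close>

definition mu1 :: "(nat \<Rightarrow> nat \<Rightarrow> real) \<Rightarrow> nat \<Rightarrow> real" where
  "mu1 \<delta> n = (\<Sum>k<n. \<delta> n k)"

definition mu2 :: "(nat \<Rightarrow> nat \<Rightarrow> real) \<Rightarrow> nat \<Rightarrow> real" where
  "mu2 \<delta> n = (\<Sum>k<n. (\<delta> n k)^2)"

definition CL_prob :: "(nat \<Rightarrow> nat \<Rightarrow> real) \<Rightarrow> nat \<Rightarrow> nat \<Rightarrow> nat \<Rightarrow> real" where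
  "CL_prob \<delta> n i j = \<delta> n i * \<delta> n j / mu1 \<delta> n"

text \<open>Unordered vertex pairs, represented as (i,j) with i < j < n.\<close>
definition upper_pairs :: "nat \<Rightarrow> (nat \<times> nat) set" where
  "upper_pairs n = {(i, j). i < j \<and> j < n}"

definition chung_lu :: "(nat \<Rightarrow> nat \<Rightarrow> real) \<Rightarrow> nat \<Rightarrow> (nat \<times> nat \<Rightarrow> bool) pmf" where
  "chung_lu \<delta> n = Pi_pmf (upper_pairs n) False
      (\<lambda>(i, j). bernoulli_pmf (CL_prob \<delta> n i j))"

definition adj :: "(nat \<times> nat \<Rightarrow> bool) \<Rightarrow> nat \<Rightarrow> nat \<Rightarrow> real" where
  "adj E i j = (if i < j then (if E (i, j) then 1 else 0)
               else if j < i then (if E (j, i) then 1 else 0) else 0)"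

definition deg :: "nat \<Rightarrow> (nat \<times> nat \<Rightarrow> bool) \<Rightarrow> nat \<Rightarrow> real" where
  "deg n E i = (\<Sum>j<n. adj E i j)"

definition m1 :: "nat \<Rightarrow> (nat \<times> nat \<Rightarrow> bool) \<Rightarrow> real" where
  "m1 n E = (\<Sum>i<n. deg n E i)"

definition m2 :: "nat \<Rightarrow> (nat \<times> nat \<Rightarrow> bool) \<Rightarrow> real" where
  "m2 n E = (\<Sum>i<n. (deg n E i)^2)"

end

theory Submission
  imports Defs
begin


definition Xe :: "'a \<Rightarrow> ('a \<Rightarrow> bool) \<Rightarrow> real" where
  "Xe e E = (if E e then 1 else 0)"

lemma fin_Pi_bool: "finite A \<Longrightarrow> finite (set_pmf (Pi_pmf A (False::bool) P))"
  by (auto simp: set_Pi_pmf intro!: finite_PiE_dflt)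

lemma Pi_int:
  assumes "finite A" shows "integrable (measure_pmf (Pi_pmf A (False::bool) P)) (f :: _ \<Rightarrow> real)"
  by (rule integrable_measure_pmf_finite[OF fin_Pi_bool[OF assms]])

lemma E_Xe:
  assumes A: "finite A" and e: "e \<in> A" and P: "P e = bernoulli_pmf (q e)" and q: "0 \<le> q e" "q e \<le> 1"
  shows "measure_pmf.expectation (Pi_pmf A False P) (\<lambda>E. g (E e)) = g True * q e + g False * (1 - q e)"
proof -
  have "measure_pmf.expectation (Pi_pmf A False P) (\<lambda>E. g (E e))
     = measure_pmf.expectation (map_pmf (\<lambda>E. E e) (Pi_pmf A False P)) g" by simp
  also have "\<dots> = measure_pmf.expectation (bernoulli_pmf (q e)) g"
    by (subst Pi_pmf_component[OF A]) (simp add: e P)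
  finally show ?thesis using q by simp
qed

lemma E_Xe2:
  assumes A: "finite A" and e: "e \<in> A" "f \<in> A" "e \<noteq> f"
   and P: "\<And>e. e \<in> A \<Longrightarrow> P e = bernoulli_pmf (q e)" and q: "\<And>e. e \<in> A \<Longrightarrow> 0 \<le> q e \<and> q e \<le> 1"
  shows "measure_pmf.expectation (Pi_pmf A False P) (\<lambda>E. Xe e E * Xe f E) = q e * q f"
proof -
  define g where "g = (\<lambda>x (b::bool). if x = e \<or> x = f then (if b then 1 else 0) else (1::real))"
  have "(\<lambda>E. Xe e E * Xe f E) = (\<lambda>E. \<Prod>x\<in>A. g x (E x))"
  proof
    fix E :: "'a \<Rightarrow> bool"
    have "(\<Prod>x\<in>A. g x (E x)) = g e (E e) * (\<Prod>x\<in>A-{e}. g x (E x))"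
      using A e by (simp add: prod.remove)
    also have "(\<Prod>x\<in>A-{e}. g x (E x)) = g f (E f) * (\<Prod>x\<in>A-{e}-{f}. g x (E x))"
      using A e by (subst prod.remove[of _ f]) auto
    also have "(\<Prod>x\<in>A-{e}-{f}. g x (E x)) = 1" by (simp add: g_def)
    finally show "Xe e E * Xe f E = (\<Prod>x\<in>A. g x (E x))" by (simp add: g_def Xe_def)
  qed
  hence "measure_pmf.expectation (Pi_pmf A False P) (\<lambda>E. Xe e E * Xe f E)
      = (\<Prod>x\<in>A. measure_pmf.expectation (P x) (g x))"
    by (simp only:) (rule expectation_prod_Pi_pmf[OF A], auto simp: g_def integrable_measure_pmf_finite)
  also have "\<dots> = (\<Prod>x\<in>A. if x = e then q e else if x = f then q f else 1)"
    using P q by (intro prod.cong) (auto simp: g_def)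
  also have "\<dots> = q e * q f"
  proof -
    have "(\<Prod>x\<in>A. if x = e then q e else if x = f then q f else 1)
       = (if x = e then q e else if x = f then q f else 1) * (\<Prod>x\<in>A-{e}. if x = e then q e else if x = f then q f else 1)" if "x = e" for x
      using A e that by (simp add: prod.remove)
    thus ?thesis using A e by (simp add: prod.remove[of "A-{e}" f])
  qed
  finally show ?thesis .
qed

lemma E_var:
  assumes A: "finite A" and e: "e \<in> A" and P: "P e = bernoulli_pmf (q e)" and q: "0 \<le> q e" "q e \<le> 1"
  shows "measure_pmf.expectation (Pi_pmf A False P) (\<lambda>E. (Xe e E - q e) * (Xe e E - q e)) = q e * (1 - q e)"
  unfolding Xe_def using E_Xe[where A=A and e=e and P=P and q=q, OF A e P q, where g="\<lambda>b. ((if b then 1 else 0) - q e) * ((if b then 1 else 0) - q e)"]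
  by (simp add: algebra_simps)

lemma E_cov:
  assumes A: "finite A" and e: "e \<in> A" "f \<in> A" "e \<noteq> f"
   and P: "\<And>e. e \<in> A \<Longrightarrow> P e = bernoulli_pmf (q e)" and q: "\<And>e. e \<in> A \<Longrightarrow> 0 \<le> q e \<and> q e \<le> 1"
  shows "measure_pmf.expectation (Pi_pmf A False P) (\<lambda>E. (Xe e E - q e) * (Xe f E - q f)) = 0"
proof -
  let ?M = "measure_pmf (Pi_pmf A False P)"
  have eq: "(\<lambda>E. (Xe e E - q e) * (Xe f E - q f)) = (\<lambda>E. (Xe e E * Xe f E - q f * Xe e E) - (q e * Xe f E - q e * q f))"
    by (auto simp: algebra_simps)
  have i: "integrable ?M (g :: _ \<Rightarrow> real)" for g by (rule Pi_int[OF A])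
  have E1: "measure_pmf.expectation (Pi_pmf A False P) (\<lambda>E. Xe x E) = q x" if "x \<in> A" for x
    using E_Xe[where A=A and e=x and P=P and q=q, OF A that P[OF that], where g="\<lambda>b. if b then 1 else 0"] q[OF that] by (simp add: Xe_def)
  show ?thesis unfolding eq
    by (simp add: Bochner_Integration.integral_diff[OF i i] E_Xe2[OF A e P q] E1 e)
qed

lemma E_sumsq:
  assumes A: "finite A" and J: "finite J" and ed: "inj_on ed J" "ed ` J \<subseteq> A"
   and P: "\<And>e. e \<in> A \<Longrightarrow> P e = bernoulli_pmf (q e)" and q: "\<And>e. e \<in> A \<Longrightarrow> 0 \<le> q e \<and> q e \<le> 1"
  shows "measure_pmf.expectation (Pi_pmf A False P) (\<lambda>E. (\<Sum>j\<in>J. Xe (ed j) E - q (ed j))^2)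
        = (\<Sum>j\<in>J. q (ed j) * (1 - q (ed j)))"
proof -
  let ?M = "measure_pmf (Pi_pmf A False P)"
  let ?Z = "\<lambda>j E. Xe (ed j) E - q (ed j)"
  have i: "integrable ?M (g :: _ \<Rightarrow> real)" for g by (rule Pi_int[OF A])
  have "(\<lambda>E. (\<Sum>j\<in>J. ?Z j E)^2) = (\<lambda>E. \<Sum>j\<in>J. \<Sum>k\<in>J. ?Z j E * ?Z k E)"
    by (simp add: power2_eq_square sum_product)
  hence "measure_pmf.expectation (Pi_pmf A False P) (\<lambda>E. (\<Sum>j\<in>J. ?Z j E)^2)
     = (\<Sum>j\<in>J. \<Sum>k\<in>J. measure_pmf.expectation (Pi_pmf A False P) (\<lambda>E. ?Z j E * ?Z k E))"
    by (simp add: Bochner_Integration.integral_sum[OF i])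
  also have "\<dots> = (\<Sum>j\<in>J. q (ed j) * (1 - q (ed j)))"
  proof (rule sum.cong[OF refl])
    fix j assume j: "j \<in> J"
    have "(\<Sum>k\<in>J. measure_pmf.expectation (Pi_pmf A False P) (\<lambda>E. ?Z j E * ?Z k E))
      = measure_pmf.expectation (Pi_pmf A False P) (\<lambda>E. ?Z j E * ?Z j E)
        + (\<Sum>k\<in>J-{j}. measure_pmf.expectation (Pi_pmf A False P) (\<lambda>E. ?Z j E * ?Z k E))"
      using J j by (simp add: sum.remove)
    also have "(\<Sum>k\<in>J-{j}. measure_pmf.expectation (Pi_pmf A False P) (\<lambda>E. ?Z j E * ?Z k E)) = 0"
    proof (rule sum.neutral, rule ballI)
      fix k assume k: "k \<in> J - {j}"
      hence "ed j \<noteq> ed k" using ed j by (auto dest: inj_onD)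
      thus "measure_pmf.expectation (Pi_pmf A False P) (\<lambda>E. ?Z j E * ?Z k E) = 0"
        using E_cov[where A=A and e="ed j" and f="ed k" and P=P and q=q, OF A _ _ _ P q] ed j k by auto
    qed
    also have "measure_pmf.expectation (Pi_pmf A False P) (\<lambda>E. ?Z j E * ?Z j E) = q (ed j) * (1 - q (ed j))"
      using E_var[where A=A and e="ed j" and P=P and q=q, OF A _ P] ed j q by auto
    finally show "(\<Sum>k\<in>J. measure_pmf.expectation (Pi_pmf A False P) (\<lambda>E. ?Z j E * ?Z k E)) = q (ed j) * (1 - q (ed j))" by simp
  qed
  finally show ?thesis .
qed

lemma mu1_pos: assumes pos: "\<And>i. i < n \<Longrightarrow> \<delta> n i > 0" and n: "n > 0" shows "mu1 \<delta> n > 0"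
  unfolding mu1_def using n pos by (intro sum_pos) auto

lemma delta_le_mu1: assumes pos: "\<And>i. i < n \<Longrightarrow> \<delta> n i > 0" and i: "i < n" shows "\<delta> n i \<le> mu1 \<delta> n"
  unfolding mu1_def using i pos by (intro member_le_sum) (auto intro: less_imp_le)

lemma CL_bounds:
  assumes pos: "\<And>i. i < n \<Longrightarrow> \<delta> n i > 0"
    and bound: "\<And>i j. i < n \<Longrightarrow> j < n \<Longrightarrow> \<delta> n i * \<delta> n j \<le> mu1 \<delta> n"
    and i: "i < n" and j: "j < n"
  shows "0 \<le> CL_prob \<delta> n i j \<and> CL_prob \<delta> n i j \<le> 1"
proof -
  have m: "mu1 \<delta> n > 0" using mu1_pos[where \<delta>=\<delta> and n=n, OF pos] i by auto
  show ?thesis unfolding CL_prob_def using m bound[OF i j] pos[OF i] pos[OF j]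
    by (auto simp: divide_le_eq_1)
qed

lemma CL_sum:
  assumes pos: "\<And>i. i < n \<Longrightarrow> \<delta> n i > 0" and n: "n > 0"
  shows "(\<Sum>j<n. CL_prob \<delta> n i j) = \<delta> n i"
proof -
  have m: "mu1 \<delta> n > 0" using mu1_pos[where \<delta>=\<delta> and n=n, OF pos n] .
  have "(\<Sum>j<n. CL_prob \<delta> n i j) = \<delta> n i * (\<Sum>j<n. \<delta> n j) / mu1 \<delta> n"
    unfolding CL_prob_def by (simp add: sum_divide_distrib sum_distrib_left)
  thus ?thesis using m by (simp add: mu1_def)
qed

lemma finite_upper_pairs: "finite (upper_pairs n)"
proof -
  have "upper_pairs n \<subseteq> {..<n} \<times> {..<n}" by (auto simp: upper_pairs_def)
  thus ?thesis by (rule finite_subset) auto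
qed

definition ed :: "nat \<Rightarrow> nat \<Rightarrow> nat \<times> nat" where "ed i j = (min i j, max i j)"

lemma deg_minus:
  assumes pos: "\<And>i. i < n \<Longrightarrow> \<delta> n i > 0" and i: "i < n"
  shows "deg n E i - \<delta> n i = (\<Sum>j\<in>{..<n}-{i}. Xe (ed i j) E - (\<lambda>(a,b). CL_prob \<delta> n a b) (ed i j)) - CL_prob \<delta> n i i"
proof -
  have n: "n > 0" using i by auto
  have s1: "deg n E i = (\<Sum>j\<in>{..<n}-{i}. Xe (ed i j) E)"
  proof -
    have "deg n E i = adj E i i + (\<Sum>j\<in>{..<n}-{i}. adj E i j)"
      unfolding deg_def using i by (simp add: sum.remove)
    also have "(\<Sum>j\<in>{..<n}-{i}. adj E i j) = (\<Sum>j\<in>{..<n}-{i}. Xe (ed i j) E)"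
      by (auto intro!: sum.cong simp: adj_def Xe_def ed_def min_def max_def split: if_splits)
    also have "adj E i i = 0" by (simp add: adj_def)
    finally show ?thesis by simp
  qed
  have s2: "\<delta> n i = CL_prob \<delta> n i i + (\<Sum>j\<in>{..<n}-{i}. (\<lambda>(a,b). CL_prob \<delta> n a b) (ed i j))"
  proof -
    have "\<delta> n i = CL_prob \<delta> n i i + (\<Sum>j\<in>{..<n}-{i}. CL_prob \<delta> n i j)"
      using CL_sum[where \<delta>=\<delta> and n=n, OF pos n, of i] i by (simp add: sum.remove)
    also have "(\<Sum>j\<in>{..<n}-{i}. CL_prob \<delta> n i j) = (\<Sum>j\<in>{..<n}-{i}. (\<lambda>(a,b). CL_prob \<delta> n a b) (ed i j))"
      by (intro sum.cong) (auto simp: CL_prob_def ed_def min_def max_def mult.commute)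
    finally show ?thesis .
  qed
  show ?thesis unfolding s1 s2 by (simp add: sum_subtractf)
qed

lemma E_deg:
  assumes pos: "\<And>i. i < n \<Longrightarrow> \<delta> n i > 0"
    and bound: "\<And>i j. i < n \<Longrightarrow> j < n \<Longrightarrow> \<delta> n i * \<delta> n j \<le> mu1 \<delta> n"
    and i: "i < n"
  shows "measure_pmf.expectation (chung_lu \<delta> n) (\<lambda>E. (deg n E i - \<delta> n i)^2) \<le> 4 * \<delta> n i"
proof -
  have n: "n > 0" using i by auto
  define q where "q = (\<lambda>(a,b). CL_prob \<delta> n a b)"
  define J where "J = {..<n} - {i}"
  define P where "P = (\<lambda>(i, j). bernoulli_pmf (CL_prob \<delta> n i j))"
  have cl: "chung_lu \<delta> n = Pi_pmf (upper_pairs n) False P" unfolding chung_lu_def P_def ..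
  have A: "finite (upper_pairs n)" by (rule finite_upper_pairs)
  have PP: "\<And>e. e \<in> upper_pairs n \<Longrightarrow> P e = bernoulli_pmf (q e)" by (auto simp: P_def q_def)
  have qq: "\<And>e. e \<in> upper_pairs n \<Longrightarrow> 0 \<le> q e \<and> q e \<le> 1"
    using CL_bounds[where \<delta>=\<delta> and n=n, OF pos bound] by (auto simp: q_def upper_pairs_def)
  have inj: "inj_on (ed i) J" unfolding J_def inj_on_def ed_def by (auto simp: min_def max_def split: if_splits)
  have sub: "ed i ` J \<subseteq> upper_pairs n" unfolding J_def ed_def upper_pairs_def using i by (auto simp: min_def max_def)
  have int: "integrable (measure_pmf (chung_lu \<delta> n)) (g :: _ \<Rightarrow> real)" for g
    unfolding cl by (rule Pi_int[OF A])
  let ?Z = "\<lambda>E. (\<Sum>j\<in>J. Xe (ed i j) E - q (ed i j))"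
  let ?p = "CL_prob \<delta> n i i"
  have "measure_pmf.expectation (chung_lu \<delta> n) (\<lambda>E. (deg n E i - \<delta> n i)^2)
     \<le> measure_pmf.expectation (chung_lu \<delta> n) (\<lambda>E. 2 * (?Z E)^2 + 2 * ?p^2)"
  proof (rule integral_mono[OF int int])
    fix E
    have "deg n E i - \<delta> n i = ?Z E - ?p" using deg_minus[where \<delta>=\<delta> and n=n, OF pos i, of E] by (simp add: q_def J_def)
    moreover have "(a - b)^2 \<le> 2 * a^2 + 2 * b^2" for a b :: real
    proof -
      have "0 \<le> (a+b)^2" by simp
      thus ?thesis by (simp add: power2_eq_square algebra_simps)
    qed
    ultimately show "(deg n E i - \<delta> n i)^2 \<le> 2 * (?Z E)^2 + 2 * ?p^2" by simp
  qed
  also have "\<dots> = 2 * measure_pmf.expectation (chung_lu \<delta> n) (\<lambda>E. (?Z E)^2) + 2 * ?p^2"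
    using int by simp
  also have "measure_pmf.expectation (chung_lu \<delta> n) (\<lambda>E. (?Z E)^2) = (\<Sum>j\<in>J. q (ed i j) * (1 - q (ed i j)))"
    unfolding cl by (rule E_sumsq[OF A _ inj sub PP qq]) (auto simp: J_def)
  also have "\<dots> \<le> (\<Sum>j\<in>J. q (ed i j))"
  proof (intro sum_mono)
    fix j assume "j \<in> J"
    hence "ed i j \<in> upper_pairs n" using sub by auto
    hence "0 \<le> q (ed i j)" "q (ed i j) \<le> 1" using qq by auto
    thus "q (ed i j) * (1 - q (ed i j)) \<le> q (ed i j)" using mult_left_le[of "1 - q (ed i j)" "q (ed i j)"] by simp
  qed
  also have "(\<Sum>j\<in>J. q (ed i j)) \<le> \<delta> n i"
  proof -
    have "(\<Sum>j\<in>J. q (ed i j)) = (\<Sum>j\<in>J. CL_prob \<delta> n i j)"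
      by (intro sum.cong) (auto simp: q_def CL_prob_def ed_def min_def max_def mult.commute)
    also have "\<dots> \<le> (\<Sum>j<n. CL_prob \<delta> n i j)"
      unfolding J_def using CL_bounds[where \<delta>=\<delta> and n=n, OF pos bound] i by (intro sum_mono2) auto
    finally show ?thesis using CL_sum[where \<delta>=\<delta> and n=n, OF pos n] by simp
  qed
  also have "?p^2 \<le> \<delta> n i"
  proof -
    have b: "0 \<le> ?p" "?p \<le> 1" using CL_bounds[where \<delta>=\<delta> and n=n, OF pos bound i i] by auto
    have "?p^2 \<le> ?p" using b by (simp add: power2_eq_square mult_left_le)
    also have "?p \<le> \<delta> n i"
    proof -
      have m: "mu1 \<delta> n > 0" using mu1_pos[where \<delta>=\<delta> and n=n, OF pos n] .
      have "\<delta> n i / mu1 \<delta> n \<le> 1" using delta_le_mu1[where \<delta>=\<delta> and n=n, OF pos i] m by simp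
      thus ?thesis unfolding CL_prob_def using pos[OF i]
        by (metis less_eq_real_def mult_left_le times_divide_eq_right)
    qed
    finally show ?thesis .
  qed
  finally show ?thesis by simp
qed

definition Sdev :: "(nat \<Rightarrow> nat \<Rightarrow> real) \<Rightarrow> nat \<Rightarrow> (nat \<times> nat \<Rightarrow> bool) \<Rightarrow> real" where
  "Sdev \<delta> n E = (\<Sum>i<n. (deg n E i - \<delta> n i)^2)"

lemma prob_S:
  assumes pos: "\<And>i. i < n \<Longrightarrow> \<delta> n i > 0"
    and bound: "\<And>i j. i < n \<Longrightarrow> j < n \<Longrightarrow> \<delta> n i * \<delta> n j \<le> mu1 \<delta> n"
    and c: "c > 0"
  shows "measure_pmf.prob (chung_lu \<delta> n) {E. Sdev \<delta> n E \<ge> c} \<le> 4 * mu1 \<delta> n / c"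
proof -
  have A: "finite (upper_pairs n)" by (rule finite_upper_pairs)
  have int: "integrable (measure_pmf (chung_lu \<delta> n)) (g :: _ \<Rightarrow> real)" for g
    unfolding chung_lu_def by (rule Pi_int[OF A])
  have "measure_pmf.expectation (chung_lu \<delta> n) (Sdev \<delta> n)
      = (\<Sum>i<n. measure_pmf.expectation (chung_lu \<delta> n) (\<lambda>E. (deg n E i - \<delta> n i)^2))"
    unfolding Sdev_def by (rule Bochner_Integration.integral_sum[OF int])
  also have "\<dots> \<le> (\<Sum>i<n. 4 * \<delta> n i)"
    by (intro sum_mono E_deg[where \<delta>=\<delta> and n=n, OF pos bound]) auto
  also have "\<dots> = 4 * mu1 \<delta> n" by (simp add: mu1_def sum_distrib_left)
  finally have ES: "measure_pmf.expectation (chung_lu \<delta> n) (Sdev \<delta> n) \<le> 4 * mu1 \<delta> n" .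
  have "measure_pmf.prob (chung_lu \<delta> n) {E \<in> space (measure_pmf (chung_lu \<delta> n)). Sdev \<delta> n E \<ge> c}
     \<le> measure_pmf.expectation (chung_lu \<delta> n) (Sdev \<delta> n) / c"
    by (rule integral_Markov_inequality_measure[OF int _ _ c]) (auto simp: Sdev_def intro!: AE_I2 sum_nonneg)
  also have "\<dots> \<le> 4 * mu1 \<delta> n / c" using ES c by (simp add: divide_right_mono)
  finally show ?thesis by simp
qed

lemma m1_incl:
  assumes pos: "\<And>i. i < n \<Longrightarrow> \<delta> n i > 0" and n: "n > 0" and eps: "\<epsilon> > 0"
    and h: "\<bar>m1 n E / mu1 \<delta> n - 1\<bar> > \<epsilon>"
  shows "Sdev \<delta> n E \<ge> \<epsilon>^2 * (mu1 \<delta> n)^2 / real n"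
proof -
  have m: "mu1 \<delta> n > 0" using mu1_pos[where \<delta>=\<delta> and n=n, OF pos n] .
  have "m1 n E / mu1 \<delta> n - 1 = (m1 n E - mu1 \<delta> n) / mu1 \<delta> n" using m by (simp add: field_simps)
  hence "\<epsilon> * mu1 \<delta> n < \<bar>m1 n E - mu1 \<delta> n\<bar>" using h m by (simp add: abs_div pos_less_divide_eq)
  also have "m1 n E - mu1 \<delta> n = (\<Sum>i<n. deg n E i - \<delta> n i)"
    by (simp add: m1_def mu1_def sum_subtractf)
  also have "\<bar>\<Sum>i<n. deg n E i - \<delta> n i\<bar> \<le> (\<Sum>i<n. \<bar>1::real\<bar> * \<bar>deg n E i - \<delta> n i\<bar>)"
    by (simp add: sum_abs)
  also have "\<dots> \<le> L2_set (\<lambda>_. 1) {..<n} * L2_set (\<lambda>i. deg n E i - \<delta> n i) {..<n}"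
    by (rule L2_set_mult_ineq)
  also have "\<dots> = sqrt (real n) * sqrt (Sdev \<delta> n E)"
    by (simp add: L2_set_def Sdev_def)
  also have "\<dots> = sqrt (real n * Sdev \<delta> n E)" by (simp add: real_sqrt_mult)
  finally have "\<epsilon> * mu1 \<delta> n < sqrt (real n * Sdev \<delta> n E)" .
  moreover have "0 \<le> real n * Sdev \<delta> n E" by (simp add: Sdev_def sum_nonneg)
  ultimately have "(\<epsilon> * mu1 \<delta> n)^2 < (sqrt (real n * Sdev \<delta> n E))^2"
    using eps m by (intro power_strict_mono) auto
  hence "(\<epsilon> * mu1 \<delta> n)^2 < real n * Sdev \<delta> n E"
    using \<open>0 \<le> real n * Sdev \<delta> n E\<close> by simp
  thus ?thesis using n by (simp add: pos_divide_le_eq power_mult_distrib mult.commute)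
qed

lemma mu2_pos: assumes pos: "\<And>i. i < n \<Longrightarrow> \<delta> n i > 0" and n: "n > 0" shows "mu2 \<delta> n > 0"
  unfolding mu2_def using n pos by (intro sum_pos) (auto, metis less_irrefl)

lemma m2_incl:
  assumes pos: "\<And>i. i < n \<Longrightarrow> \<delta> n i > 0" and n: "n > 0" and eta: "0 < \<eta>" "\<eta> \<le> 1"
    and h: "\<bar>m2 n E / mu2 \<delta> n - 1\<bar> > 3 * \<eta>"
  shows "Sdev \<delta> n E \<ge> \<eta>^2 * mu2 \<delta> n"
proof (rule ccontr)
  assume "\<not> ?thesis"
  hence S: "Sdev \<delta> n E < \<eta>^2 * mu2 \<delta> n" by simp
  have m: "mu2 \<delta> n > 0" using mu2_pos[where \<delta>=\<delta> and n=n, OF pos n] .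
  define a where "a = L2_set (deg n E) {..<n}"
  define b where "b = L2_set (\<delta> n) {..<n}"
  define s where "s = L2_set (\<lambda>i. deg n E i - \<delta> n i) {..<n}"
  have a2: "a^2 = m2 n E" unfolding a_def L2_set_def m2_def by (simp add: sum_nonneg)
  have b2: "b^2 = mu2 \<delta> n" unfolding b_def L2_set_def mu2_def by (simp add: sum_nonneg)
  have s2: "s^2 = Sdev \<delta> n E" unfolding s_def L2_set_def Sdev_def by (simp add: sum_nonneg)
  have a0: "a \<ge> 0" "b \<ge> 0" "s \<ge> 0" unfolding a_def b_def s_def by (auto simp: L2_set_def intro!: sum_nonneg)
  have t1: "a \<le> s + b"
    using L2_set_triangle_ineq[of "\<lambda>i. deg n E i - \<delta> n i" "\<delta> n" "{..<n}"] by (simp add: a_def s_def b_def)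
  have t2: "b \<le> s + a"
  proof -
    have "b \<le> L2_set (\<lambda>i. \<delta> n i - deg n E i) {..<n} + a"
      using L2_set_triangle_ineq[of "\<lambda>i. \<delta> n i - deg n E i" "deg n E" "{..<n}"] by (simp add: a_def b_def)
    also have "L2_set (\<lambda>i. \<delta> n i - deg n E i) {..<n} = s"
      unfolding s_def L2_set_def by (intro arg_cong[where f=sqrt] sum.cong refl) (rule power2_commute)
    finally show ?thesis .
  qed
  have eb: "(\<eta> * b)^2 = \<eta>^2 * mu2 \<delta> n" unfolding b2[symmetric] by (rule power_mult_distrib)
  have ssq: "s^2 < (\<eta> * b)^2" unfolding eb s2 by (rule S)
  have eb0: "0 \<le> \<eta> * b" using a0 eta by simp
  have sb: "s < \<eta> * b" by (rule power_less_imp_less_base[OF ssq eb0])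
  have ebb: "\<eta> * b \<le> b" using a0 eta by (intro mult_left_le_one_le) auto
  have "m2 n E - mu2 \<delta> n = (a - b) * (a + b)"
    unfolding a2[symmetric] b2[symmetric] by (simp add: power2_eq_square algebra_simps)
  hence "\<bar>m2 n E - mu2 \<delta> n\<bar> = \<bar>a - b\<bar> * (a + b)"
    using a0 by (simp add: abs_mult)
  also have "\<dots> \<le> s * ((1 + \<eta>) * b + b)"
  proof (rule mult_mono)
    show "\<bar>a - b\<bar> \<le> s" using t1 t2 by simp
    show "a + b \<le> (1 + \<eta>) * b + b" using t1 sb by (simp add: algebra_simps)
  qed (use a0 in auto)
  also have "\<dots> \<le> (\<eta> * b) * (3 * b)"
  proof (rule mult_mono)
    show "s \<le> \<eta> * b" using sb by simp
    show "(1 + \<eta>) * b + b \<le> 3 * b" using ebb by (simp add: algebra_simps)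
    show "0 \<le> \<eta> * b" by (rule eb0)
    show "0 \<le> (1 + \<eta>) * b + b" using a0 eta by simp
  qed
  also have "\<dots> = 3 * \<eta> * mu2 \<delta> n" using b2 by (simp add: power2_eq_square)
  finally have "\<bar>m2 n E - mu2 \<delta> n\<bar> \<le> 3 * \<eta> * mu2 \<delta> n" .
  moreover have "m2 n E / mu2 \<delta> n - 1 = (m2 n E - mu2 \<delta> n) / mu2 \<delta> n" using m by (simp add: field_simps)
  ultimately have "\<bar>m2 n E / mu2 \<delta> n - 1\<bar> \<le> 3 * \<eta>" using m by (simp add: abs_div divide_le_eq)
  thus False using h by simp
qed

theorem theorem2:
  fixes \<delta> :: "nat \<Rightarrow> nat \<Rightarrow> real"
  assumes pos: "\<And>n i. i < n \<Longrightarrow> \<delta> n i > 0"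
    and bound: "\<And>n i j. i < n \<Longrightarrow> j < n \<Longrightarrow> \<delta> n i * \<delta> n j \<le> mu1 \<delta> n"
    and avg: "filterlim (\<lambda>n. mu1 \<delta> n / real n) at_top sequentially"
    and omega: "(\<lambda>n. (ln (real n))^2) \<in> o(\<lambda>n. mu2 \<delta> n / mu1 \<delta> n)"
  shows "\<forall>\<epsilon>>0.
      ((\<lambda>n. measure_pmf.prob (chung_lu \<delta> n) {E. \<bar>m1 n E / mu1 \<delta> n - 1\<bar> > \<epsilon>}) \<longlongrightarrow> 0) sequentially
    \<and> ((\<lambda>n. measure_pmf.prob (chung_lu \<delta> n) {E. \<bar>m2 n E / mu2 \<delta> n - 1\<bar> > \<epsilon>}) \<longlongrightarrow> 0) sequentially"
proof (intro allI impI conjI)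
  fix \<epsilon> :: real assume eps: "\<epsilon> > 0"
  show "((\<lambda>n. measure_pmf.prob (chung_lu \<delta> n) {E. \<bar>m1 n E / mu1 \<delta> n - 1\<bar> > \<epsilon>}) \<longlongrightarrow> 0) sequentially"
  proof (rule tendsto_sandwich[where f="\<lambda>_. 0" and h="\<lambda>n. 4 / \<epsilon>^2 * inverse (mu1 \<delta> n / real n)"])
    show "\<forall>\<^sub>F n in sequentially. 0 \<le> measure_pmf.prob (chung_lu \<delta> n) {E. \<bar>m1 n E / mu1 \<delta> n - 1\<bar> > \<epsilon>}"
      by (intro always_eventually allI measure_nonneg)
    show "((\<lambda>_. 0) \<longlongrightarrow> (0::real)) sequentially" by simp
    show "((\<lambda>n. 4 / \<epsilon>^2 * inverse (mu1 \<delta> n / real n)) \<longlongrightarrow> 0) sequentially"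
      by (rule tendsto_mult_right_zero[OF tendsto_inverse_0_at_top[OF avg]])
    show "\<forall>\<^sub>F n in sequentially. measure_pmf.prob (chung_lu \<delta> n) {E. \<bar>m1 n E / mu1 \<delta> n - 1\<bar> > \<epsilon>}
          \<le> 4 / \<epsilon>^2 * inverse (mu1 \<delta> n / real n)"
    proof (rule eventually_sequentiallyI[of 1])
      fix n :: nat assume "n \<ge> 1"
      hence n: "n > 0" by simp
      have m: "mu1 \<delta> n > 0" using mu1_pos[where \<delta>=\<delta> and n=n, OF pos n] .
      have c: "\<epsilon>^2 * (mu1 \<delta> n)^2 / real n > 0" using eps m n by simp
      have sub: "{E. \<bar>m1 n E / mu1 \<delta> n - 1\<bar> > \<epsilon>} \<subseteq> {E. Sdev \<delta> n E \<ge> \<epsilon>^2 * (mu1 \<delta> n)^2 / real n}"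
      proof
        fix E assume "E \<in> {E. \<bar>m1 n E / mu1 \<delta> n - 1\<bar> > \<epsilon>}"
        hence "\<bar>m1 n E / mu1 \<delta> n - 1\<bar> > \<epsilon>" by simp
        from m1_incl[where \<delta>=\<delta> and n=n, OF pos n eps this]
        show "E \<in> {E. Sdev \<delta> n E \<ge> \<epsilon>^2 * (mu1 \<delta> n)^2 / real n}" by simp
      qed
      have "measure_pmf.prob (chung_lu \<delta> n) {E. \<bar>m1 n E / mu1 \<delta> n - 1\<bar> > \<epsilon>}
         \<le> measure_pmf.prob (chung_lu \<delta> n) {E. Sdev \<delta> n E \<ge> \<epsilon>^2 * (mu1 \<delta> n)^2 / real n}"
        by (rule measure_pmf.finite_measure_mono[OF sub]) simp
      also have "\<dots> \<le> 4 * mu1 \<delta> n / (\<epsilon>^2 * (mu1 \<delta> n)^2 / real n)"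
        by (rule prob_S[where \<delta>=\<delta> and n=n, OF pos bound c])
      also have "\<dots> = 4 / \<epsilon>^2 * inverse (mu1 \<delta> n / real n)"
        using m eps n by (simp add: divide_simps power2_eq_square)
      finally show "measure_pmf.prob (chung_lu \<delta> n) {E. \<bar>m1 n E / mu1 \<delta> n - 1\<bar> > \<epsilon>}
          \<le> 4 / \<epsilon>^2 * inverse (mu1 \<delta> n / real n)" .
    qed
  qed
  define \<eta> where "\<eta> = min 1 (\<epsilon> / 3)"
  have eta: "0 < \<eta>" "\<eta> \<le> 1" "3 * \<eta> \<le> \<epsilon>" using eps by (auto simp: \<eta>_def)
  have lnlim: "filterlim (\<lambda>n::nat. (ln (real n))^2) at_top sequentially"
    by (intro filterlim_pow_at_top filterlim_compose[OF ln_at_top filterlim_real_sequentially]) auto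
  have rat: "filterlim (\<lambda>n. mu2 \<delta> n / mu1 \<delta> n) at_top sequentially"
  proof (rule filterlim_at_top_mono[OF lnlim])
    have ev: "\<forall>\<^sub>F n in sequentially. norm ((ln (real n))^2) \<le> 1 * norm (mu2 \<delta> n / mu1 \<delta> n)"
      using landau_o.smallD[OF omega, of 1] by simp
    show "\<forall>\<^sub>F n in sequentially. (ln (real n))^2 \<le> mu2 \<delta> n / mu1 \<delta> n"
      using ev eventually_gt_at_top[of 0]
    proof eventually_elim
      case (elim n)
      have "mu2 \<delta> n / mu1 \<delta> n > 0"
        using mu1_pos[where \<delta>=\<delta> and n=n, OF pos elim(2)] mu2_pos[where \<delta>=\<delta> and n=n, OF pos elim(2)] by simp
      thus ?case using elim(1) by simp
    qed
  qed
  show "((\<lambda>n. measure_pmf.prob (chung_lu \<delta> n) {E. \<bar>m2 n E / mu2 \<delta> n - 1\<bar> > \<epsilon>}) \<longlongrightarrow> 0) sequentially"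
  proof (rule tendsto_sandwich[where f="\<lambda>_. 0" and h="\<lambda>n. 4 / \<eta>^2 * inverse (mu2 \<delta> n / mu1 \<delta> n)"])
    show "\<forall>\<^sub>F n in sequentially. 0 \<le> measure_pmf.prob (chung_lu \<delta> n) {E. \<bar>m2 n E / mu2 \<delta> n - 1\<bar> > \<epsilon>}"
      by (intro always_eventually allI measure_nonneg)
    show "((\<lambda>_. 0) \<longlongrightarrow> (0::real)) sequentially" by simp
    show "((\<lambda>n. 4 / \<eta>^2 * inverse (mu2 \<delta> n / mu1 \<delta> n)) \<longlongrightarrow> 0) sequentially"
      by (rule tendsto_mult_right_zero[OF tendsto_inverse_0_at_top[OF rat]])
    show "\<forall>\<^sub>F n in sequentially. measure_pmf.prob (chung_lu \<delta> n) {E. \<bar>m2 n E / mu2 \<delta> n - 1\<bar> > \<epsilon>}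
          \<le> 4 / \<eta>^2 * inverse (mu2 \<delta> n / mu1 \<delta> n)"
    proof (rule eventually_sequentiallyI[of 1])
      fix n :: nat assume "n \<ge> 1"
      hence n: "n > 0" by simp
      have m: "mu1 \<delta> n > 0" using mu1_pos[where \<delta>=\<delta> and n=n, OF pos n] .
      have m2p: "mu2 \<delta> n > 0" using mu2_pos[where \<delta>=\<delta> and n=n, OF pos n] .
      have c: "\<eta>^2 * mu2 \<delta> n > 0" using eta m2p by simp
      have sub: "{E. \<bar>m2 n E / mu2 \<delta> n - 1\<bar> > \<epsilon>} \<subseteq> {E. Sdev \<delta> n E \<ge> \<eta>^2 * mu2 \<delta> n}"
      proof
        fix E assume "E \<in> {E. \<bar>m2 n E / mu2 \<delta> n - 1\<bar> > \<epsilon>}"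
        hence "\<bar>m2 n E / mu2 \<delta> n - 1\<bar> > 3 * \<eta>" using eta(3) by simp
        from m2_incl[where \<delta>=\<delta> and n=n, OF pos n eta(1,2) this]
        show "E \<in> {E. Sdev \<delta> n E \<ge> \<eta>^2 * mu2 \<delta> n}" by simp
      qed
      have "measure_pmf.prob (chung_lu \<delta> n) {E. \<bar>m2 n E / mu2 \<delta> n - 1\<bar> > \<epsilon>}
         \<le> measure_pmf.prob (chung_lu \<delta> n) {E. Sdev \<delta> n E \<ge> \<eta>^2 * mu2 \<delta> n}"
        by (rule measure_pmf.finite_measure_mono[OF sub]) simp
      also have "\<dots> \<le> 4 * mu1 \<delta> n / (\<eta>^2 * mu2 \<delta> n)"
        by (rule prob_S[where \<delta>=\<delta> and n=n, OF pos bound c])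
      also have "\<dots> = 4 / \<eta>^2 * inverse (mu2 \<delta> n / mu1 \<delta> n)"
        using m m2p eta by (simp add: divide_simps)
      finally show "measure_pmf.prob (chung_lu \<delta> n) {E. \<bar>m2 n E / mu2 \<delta> n - 1\<bar> > \<epsilon>}
          \<le> 4 / \<eta>^2 * inverse (mu2 \<delta> n / mu1 \<delta> n)" .
    qed
  qed
qed

end
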